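(* Let $h_1,h_2,\dots$ be a sequence of positive integers satisfying the repeat property, and let $w>0$. For each $t$ define $f_t:\mathbb{Z}_{\ge0}\to\mathbb{R}$ by $f_t(m)=w$ if $m<h_t$ and $f_t(m)=0$ otherwise, and for a finite interval of times $I$ let $f_I(m)=\sum_{t\in I}f_t(m)$. Then for every finite interval $I$ and every integer $m\ge 2$, $$f_I(m-1)-f_I(m)\ \ge\ f_I(m)-f_I(m+1)-w.$$
   Context: A sequence $h_1,h_2,\dots$ of positive integers has the repeat property if for all $t_1<t_2$ with $h_{t_1}=h_{t_2}$ we have $\{2,3,\dots,h_{t_1}-1\}\subseteq\{h_{t_1+1},h_{t_1+2},\dots,h_{t_2-1}\}$. (Such sequences are exactly the sequences of positions, in the Belady ranking, of requested pages within one weight class; $f_t$ is the cost of a canonical algorithm holding $m$ pages of that class.) *)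

theory Defs
  imports Complex_Main
begin

text \<open>Sequences are indexed from 1: only the values h t for t >= 1 matter.\<close>

definition repeat_property :: "(nat \<Rightarrow> nat) \<Rightarrow> bool" where
  "repeat_property h \<longleftrightarrow>
     (\<forall>t. 1 \<le> t \<longrightarrow> 0 < h t) \<and>
     (\<forall>t1 t2. 1 \<le> t1 \<longrightarrow> t1 < t2 \<longrightarrow> h t1 = h t2 \<longrightarrow>
        {2..<h t1} \<subseteq> h ` {t1<..<t2})"

definition f_t :: "(nat \<Rightarrow> nat) \<Rightarrow> real \<Rightarrow> nat \<Rightarrow> nat \<Rightarrow> real" where
  "f_t h w t m = (if m < h t then w else 0)"

definition f_I :: "(nat \<Rightarrow> nat) \<Rightarrow> real \<Rightarrow> nat set \<Rightarrow> nat \<Rightarrow> real" where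
  "f_I h w I m = (\<Sum>t\<in>I. f_t h w t m)"

end

theory Submission
  imports Defs
begin

lemma diff_count:
  fixes h :: "nat \<Rightarrow> nat" and S :: "nat set" and k :: nat
  assumes "finite S" "k \<ge> 1"
  shows "f_I h w S (k - 1) - f_I h w S k = w * card {t\<in>S. h t = k}"
proof -
  have "f_I h w S (k - 1) - f_I h w S k = (\<Sum>t\<in>S. f_t h w t (k-1) - f_t h w t k)"
    unfolding f_I_def by (simp add: sum_subtractf)
  also have "\<dots> = (\<Sum>t\<in>S. if h t = k then w else 0)"
    using assms(2) by (intro sum.cong) (auto simp: f_t_def)
  also have "\<dots> = (\<Sum>t\<in>{t\<in>S. h t = k}. w)"
    using sum.inter_filter[OF assms(1), of "\<lambda>_. w" "\<lambda>t. h t = k"] by simp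
  also have "\<dots> = w * card {t\<in>S. h t = k}" by simp
  finally show ?thesis .
qed

lemma card_bound:
  fixes h :: "nat \<Rightarrow> nat"
  assumes rp: "repeat_property h" and a: "1 \<le> a" and m: "m \<ge> 2"
  shows "card {t\<in>{a..b}. h t = m+1} \<le> card {t\<in>{a..b}. h t = m} + 1"
proof (cases "{t\<in>{a..b}. h t = m+1} = {}")
  case True then show ?thesis by (subst True) simp
next
  case False
  define A where "A = {t\<in>{a..b}. h t = m+1}"
  define B where "B = {t\<in>{a..b}. h t = m}"
  have fA: "finite A" unfolding A_def by simp
  define M where "M = Max A"
  have MA: "M \<in> A" using False fA unfolding M_def A_def by (intro Max_in) auto
  define g where "g t = (LEAST s. t < s \<and> h s = m)" for t
  have key: "\<exists>s. t1 < s \<and> s < t2 \<and> h s = m" if "t1 \<in> A" "t2 \<in> A" "t1 < t2" for t1 t2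
  proof -
    have "{2..<h t1} \<subseteq> h ` {t1<..<t2}"
    proof -
      have "1 \<le> t1" "h t1 = h t2" using that a unfolding A_def by auto
      then show ?thesis using rp that(3) unfolding repeat_property_def by blast
    qed
    moreover have "m \<in> {2..<h t1}" using that m unfolding A_def by auto
    ultimately show ?thesis by force
  qed
  have gprop: "t < g t \<and> g t < t2 \<and> h (g t) = m" if tt: "t \<in> A" "t2 \<in> A" "t < t2" for t t2
  proof -
    obtain s where s: "t < s" "s < t2" "h s = m" using key[OF tt] by blast
    have "t < g t \<and> h (g t) = m" unfolding g_def using s by (metis (mono_tags, lifting) LeastI)
    moreover have "g t \<le> s" unfolding g_def using s by (intro Least_le) auto
    ultimately show ?thesis using s by auto
  qed
  have inj: "inj_on g (A - {M})"
  proof (rule inj_onI)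
    fix x y assume x: "x \<in> A - {M}" and y: "y \<in> A - {M}" and e: "g x = g y"
    show "x = y"
    proof (rule ccontr)
      assume "x \<noteq> y"
      then consider "x < y" | "y < x" by linarith
      then show False
      proof cases
        case 1
        have "g x < y" using gprop[of x y] x y 1 by auto
        moreover have "y < g y" using gprop[of y M] y fA MA unfolding M_def
          by (metis DiffE Max_ge insertI1 le_neq_implies_less)
        ultimately show False using e by simp
      next
        case 2
        have "g y < x" using gprop[of y x] x y 2 by auto
        moreover have "x < g x" using gprop[of x M] x fA MA unfolding M_def
          by (metis DiffE Max_ge insertI1 le_neq_implies_less)
        ultimately show False using e by simp
      qed
    qed
  qed
  have sub: "g ` (A - {M}) \<subseteq> B"
  proof
    fix y assume "y \<in> g ` (A - {M})"
    then obtain x where x: "x \<in> A - {M}" and y: "y = g x" by auto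
    have xM: "x < M" using x fA MA unfolding M_def
      by (metis DiffE Max_ge insertI1 le_neq_implies_less)
    have "x < g x \<and> g x < M \<and> h (g x) = m" using gprop[of x M] x MA xM by auto
    then show "y \<in> B" using x MA y unfolding A_def B_def by auto
  qed
  have "card (A - {M}) \<le> card B"
    using card_inj_on_le[OF inj sub] unfolding B_def by simp
  moreover have "card A = card (A - {M}) + 1" using MA fA
    by (metis card_Suc_Diff1 Suc_eq_plus1)
  ultimately show ?thesis unfolding A_def B_def by simp
qed

theorem lemma6:
  fixes h :: "nat \<Rightarrow> nat" and w :: real and a b m :: nat
  assumes "repeat_property h"
    and "w > 0"
    and "1 \<le> a"
    and "m \<ge> 2"
  shows "f_I h w {a..b} (m - 1) - f_I h w {a..b} m
           \<ge> f_I h w {a..b} m - f_I h w {a..b} (m + 1) - w"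
proof -
  have d1: "f_I h w {a..b} (m - 1) - f_I h w {a..b} m = w * card {t\<in>{a..b}. h t = m}"
    using assms by (intro diff_count) auto
  have d2: "f_I h w {a..b} m - f_I h w {a..b} (m+1) = w * card {t\<in>{a..b}. h t = m+1}"
    using diff_count[of "{a..b}" "m+1" h w] by simp
  have "real (card {t\<in>{a..b}. h t = m+1}) \<le> real (card {t\<in>{a..b}. h t = m}) + 1"
    using card_bound[OF assms(1,3,4), of b] by linarith
  then have "w * card {t\<in>{a..b}. h t = m+1} \<le> w * card {t\<in>{a..b}. h t = m} + w"
    using assms(2) by (metis distrib_left mult.right_neutral mult_left_mono less_imp_le)
  then show ?thesis using d1 d2 by linarith
qed

end
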